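(* Let $k$ be a field and consider the graded algebras (with $\deg x=\deg y=1$) $A(p)=k\langle x,y\rangle/(xy^2-p^2y^2x,\ x^3y+px^2yx+p^2xyx^2+p^3yx^3)$ ($0\ne p\in k$); $B(p)=k\langle x,y\rangle/(xy^2+ip^2y^2x,\ x^3y+px^2yx+p^2xyx^2+p^3yx^3)$ ($0\ne p\in k$, $i\in k$, $i^2=-1$); $C(p)=k\langle x,y\rangle/(xy^2+pyxy+p^2y^2x,\ x^3y+jp^3yx^3)$ ($0\ne p\in k$, $j\in k$, $j^2-j+1=0$); $D(v,p)=k\langle x,y\rangle/(xy^2+vyxy+p^2y^2x,\ x^3y+(v+p)x^2yx+(p^2+pv)xyx^2+p^3yx^3)$ ($v,p\in k$, $p\ne0$). Two algebras from this list are isomorphic (as graded algebras) if and only if their defining relations (the displayed degree-3 relation and degree-4 relation, as elements of $k\langle x,y\rangle$) are the same. *)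

theory Defs
  imports Main
begin

text \<open>Words over the alphabet {x,y}: x is encoded as False, y as True.
  A noncommutative polynomial is a function from words to coefficients;
  the free algebra consists of those with finite support.\<close>

type_synonym 'k ncpoly = "bool list \<Rightarrow> 'k"

abbreviation (input) X :: bool where "X \<equiv> False"
abbreviation (input) Y :: bool where "Y \<equiv> True"

definition ncpolys :: "'k::field ncpoly set" where
  "ncpolys = {f. finite {w. f w \<noteq> 0}}"

definition nc_zero :: "'k::field ncpoly" where
  "nc_zero = (\<lambda>w. 0)"

definition nc_one :: "'k::field ncpoly" where
  "nc_one = (\<lambda>w. if w = [] then 1 else 0)"

definition nc_add :: "'k::field ncpoly \<Rightarrow> 'k ncpoly \<Rightarrow> 'k ncpoly" where
  "nc_add f g = (\<lambda>w. f w + g w)"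

definition nc_smult :: "'k::field \<Rightarrow> 'k ncpoly \<Rightarrow> 'k ncpoly" where
  "nc_smult c f = (\<lambda>w. c * f w)"

definition nc_mult :: "'k::field ncpoly \<Rightarrow> 'k ncpoly \<Rightarrow> 'k ncpoly" where
  "nc_mult f g = (\<lambda>w. \<Sum>i\<le>length w. f (take i w) * g (drop i w))"

definition nc_terms :: "('k::field \<times> bool list) list \<Rightarrow> 'k ncpoly" where
  "nc_terms ts = (\<lambda>u. sum_list (map (\<lambda>(c, w). if w = u then c else 0) ts))"

definition nc_homogeneous :: "nat \<Rightarrow> 'k::field ncpoly \<Rightarrow> bool" where
  "nc_homogeneous n f \<longleftrightarrow> f \<in> ncpolys \<and> (\<forall>w. f w \<noteq> 0 \<longrightarrow> length w = n)"

definition nc_is_ideal :: "'k::field ncpoly set \<Rightarrow> bool" where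
  "nc_is_ideal I \<longleftrightarrow> I \<subseteq> ncpolys \<and> nc_zero \<in> I \<and>
     (\<forall>f\<in>I. \<forall>g\<in>I. nc_add f g \<in> I) \<and>
     (\<forall>f\<in>I. \<forall>g\<in>ncpolys. nc_mult g f \<in> I \<and> nc_mult f g \<in> I)"

definition nc_ideal_gen :: "'k::field ncpoly set \<Rightarrow> 'k ncpoly set" where
  "nc_ideal_gen S = \<Inter>{I. nc_is_ideal I \<and> S \<subseteq> I}"

definition nc_coset :: "'k::field ncpoly set \<Rightarrow> 'k ncpoly \<Rightarrow> 'k ncpoly set" where
  "nc_coset I f = {g \<in> ncpolys. nc_add g (nc_smult (-1) f) \<in> I}"

definition nc_quot :: "'k::field ncpoly set \<Rightarrow> 'k ncpoly set set" where
  "nc_quot I = nc_coset I ` ncpolys"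

definition nc_quot_deg :: "'k::field ncpoly set \<Rightarrow> nat \<Rightarrow> 'k ncpoly set set" where
  "nc_quot_deg I n = nc_coset I ` {f. nc_homogeneous n f}"

definition graded_alg_iso ::
  "'k::field ncpoly set \<Rightarrow> 'k ncpoly set \<Rightarrow> ('k ncpoly set \<Rightarrow> 'k ncpoly set) \<Rightarrow> bool" where
  "graded_alg_iso I J phi \<longleftrightarrow>
     bij_betw phi (nc_quot I) (nc_quot J) \<and>
     phi (nc_coset I nc_one) = nc_coset J nc_one \<and>
     (\<forall>f\<in>ncpolys. \<forall>g\<in>ncpolys. \<forall>f'\<in>ncpolys. \<forall>g'\<in>ncpolys.
        phi (nc_coset I f) = nc_coset J f' \<and> phi (nc_coset I g) = nc_coset J g' \<longrightarrow>
          phi (nc_coset I (nc_add f g)) = nc_coset J (nc_add f' g') \<and>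
          phi (nc_coset I (nc_mult f g)) = nc_coset J (nc_mult f' g')) \<and>
     (\<forall>c. \<forall>f\<in>ncpolys. \<forall>f'\<in>ncpolys.
        phi (nc_coset I f) = nc_coset J f' \<longrightarrow>
          phi (nc_coset I (nc_smult c f)) = nc_coset J (nc_smult c f')) \<and>
     (\<forall>n. phi ` nc_quot_deg I n = nc_quot_deg J n)"

definition graded_alg_isomorphic :: "'k::field ncpoly set \<Rightarrow> 'k ncpoly set \<Rightarrow> bool" where
  "graded_alg_isomorphic I J \<longleftrightarrow> (\<exists>phi. graded_alg_iso I J phi)"

definition relsA :: "'k::field \<Rightarrow> 'k ncpoly \<times> 'k ncpoly" where
  "relsA p = (nc_terms [(1, [X,Y,Y]), (- (p^2), [Y,Y,X])],
              nc_terms [(1, [X,X,X,Y]), (p, [X,X,Y,X]), (p^2, [X,Y,X,X]), (p^3, [Y,X,X,X])])"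

definition relsB :: "'k::field \<Rightarrow> 'k \<Rightarrow> 'k ncpoly \<times> 'k ncpoly" where
  "relsB i p = (nc_terms [(1, [X,Y,Y]), (i * p^2, [Y,Y,X])],
              nc_terms [(1, [X,X,X,Y]), (p, [X,X,Y,X]), (p^2, [X,Y,X,X]), (p^3, [Y,X,X,X])])"

definition relsC :: "'k::field \<Rightarrow> 'k \<Rightarrow> 'k ncpoly \<times> 'k ncpoly" where
  "relsC j p = (nc_terms [(1, [X,Y,Y]), (p, [Y,X,Y]), (p^2, [Y,Y,X])],
              nc_terms [(1, [X,X,X,Y]), (j * p^3, [Y,X,X,X])])"

definition relsD :: "'k::field \<Rightarrow> 'k \<Rightarrow> 'k ncpoly \<times> 'k ncpoly" where
  "relsD v p = (nc_terms [(1, [X,Y,Y]), (v, [Y,X,Y]), (p^2, [Y,Y,X])],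
              nc_terms [(1, [X,X,X,Y]), (v + p, [X,X,Y,X]), (p^2 + p * v, [X,Y,X,X]),
                        (p^3, [Y,X,X,X])])"

definition listed_rels :: "('k::field ncpoly \<times> 'k ncpoly) set" where
  "listed_rels =
     {relsA p | p. p \<noteq> 0} \<union>
     {relsB i p | i p. p \<noteq> 0 \<and> i^2 = -1} \<union>
     {relsC j p | j p. p \<noteq> 0 \<and> j^2 - j + 1 = 0} \<union>
     {relsD v p | v p. p \<noteq> 0}"

definition rel_ideal :: "'k::field ncpoly \<times> 'k ncpoly \<Rightarrow> 'k ncpoly set" where
  "rel_ideal r = nc_ideal_gen {fst r, snd r}"

end

theory Submission
  imports Defs
begin

lemma ncpolys_iff: "f \<in> ncpolys \<longleftrightarrow> finite {w. f w \<noteq> 0}"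
  by (simp add: ncpolys_def)

lemma nc_mult_Nil[simp]: "nc_mult f g [] = f [] * g []"
  by (simp add: nc_mult_def)

lemma nc_mult_Cons: "nc_mult f g (c # w) = f [] * g (c # w) + nc_mult (\<lambda>u. f (c # u)) g w"
  unfolding nc_mult_def
  by (simp add: sum.atMost_Suc_shift del: sum.atMost_Suc)

lemma nc_mult_snoc: "nc_mult f g (w @ [c]) = nc_mult f (\<lambda>u. g (u @ [c])) w + f (w @ [c]) * g []"
proof -
  have "nc_mult f g (w @ [c]) = (\<Sum>i\<le>length w. f (take i (w @ [c])) * g (drop i (w @ [c]))) + f (w @ [c]) * g []"
    unfolding nc_mult_def by simp
  also have "(\<Sum>i\<le>length w. f (take i (w @ [c])) * g (drop i (w @ [c]))) = (\<Sum>i\<le>length w. f (take i w) * g (drop i w @ [c]))"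
    by (rule sum.cong) auto
  finally show ?thesis unfolding nc_mult_def by simp
qed

lemma nc_mult_vanish_right:
  assumes "\<And>u. length u \<le> length w \<Longrightarrow> g u = 0"
  shows "nc_mult f g w = 0"
  unfolding nc_mult_def using assms by (intro sum.neutral) auto

lemma nc_mult_vanish_left:
  assumes "\<And>u. length u \<le> length w \<Longrightarrow> f u = 0"
  shows "nc_mult f g w = 0"
  unfolding nc_mult_def using assms by (intro sum.neutral) auto

lemma nc_mult_zero_left[simp]: "nc_mult (\<lambda>u. 0) g = (\<lambda>w. 0)"
  by (rule ext, rule nc_mult_vanish_left) auto

lemma nc_mult_support: "nc_mult f g w \<noteq> 0 \<Longrightarrow> \<exists>i. f (take i w) \<noteq> 0 \<and> g (drop i w) \<noteq> 0"
  unfolding nc_mult_def by (metis (mono_tags, lifting) mult_eq_0_iff sum.neutral)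

lemma ncpolys_mult: assumes "f \<in> ncpolys" "g \<in> ncpolys" shows "nc_mult f g \<in> ncpolys"
proof -
  let ?F = "{w. f w \<noteq> 0}" and ?G = "{w. g w \<noteq> 0}"
  have "{w. nc_mult f g w \<noteq> 0} \<subseteq> (\<lambda>(u,v). u @ v) ` (?F \<times> ?G)"
  proof
    fix w assume "w \<in> {w. nc_mult f g w \<noteq> 0}"
    then obtain i where "f (take i w) \<noteq> 0" "g (drop i w) \<noteq> 0" using nc_mult_support by blast
    then show "w \<in> (\<lambda>(u,v). u @ v) ` (?F \<times> ?G)"
      by (intro image_eqI[of _ _ "(take i w, drop i w)"]) auto
  qed
  moreover have "finite ((\<lambda>(u,v). u @ v) ` (?F \<times> ?G))" using assms by (simp add: ncpolys_def)
  ultimately show ?thesis by (simp add: ncpolys_def finite_subset)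
qed

lemma ncpolys_add: assumes "f \<in> ncpolys" "g \<in> ncpolys" shows "nc_add f g \<in> ncpolys"
proof -
  have "{w. nc_add f g w \<noteq> 0} \<subseteq> {w. f w \<noteq> 0} \<union> {w. g w \<noteq> 0}" by (auto simp: nc_add_def)
  then show ?thesis using assms by (simp add: ncpolys_def finite_subset)
qed

lemma ncpolys_smult: assumes "f \<in> ncpolys" shows "nc_smult c f \<in> ncpolys"
proof -
  have "{w. nc_smult c f w \<noteq> 0} \<subseteq> {w. f w \<noteq> 0}" by (auto simp: nc_smult_def)
  then show ?thesis using assms by (simp add: ncpolys_def finite_subset)
qed

definition mword :: "bool list \<Rightarrow> 'k::field ncpoly" where
  "mword v = (\<lambda>u. if u = v then 1 else 0)"

definition cst :: "'k::field \<Rightarrow> 'k ncpoly" where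
  "cst c = (\<lambda>u. if u = [] then c else 0)"

lemma ncpolys_mword: "mword v \<in> ncpolys"
proof -
  have "{w. mword v w \<noteq> (0::'a::field)} \<subseteq> {v}" by (auto simp: mword_def)
  then show ?thesis by (simp add: ncpolys_def finite_subset)
qed

lemma ncpolys_cst: "cst c \<in> ncpolys"
proof -
  have "{w. cst c w \<noteq> 0} \<subseteq> {[]}" by (auto simp: cst_def)
  then show ?thesis by (simp add: ncpolys_def finite_subset)
qed

lemma ncpolys_zero: "nc_zero \<in> ncpolys" by (simp add: ncpolys_def nc_zero_def)

lemma nc_mult_cst: "nc_mult (cst c) g = nc_smult c g"
proof (rule ext)
  fix w show "nc_mult (cst c) g w = nc_smult c g w"
    by (cases w) (simp_all add: nc_mult_Cons cst_def nc_smult_def)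
qed

lemma nc_mult_mword: "nc_mult (mword a) (mword b) = (mword (a @ b) :: 'k::field ncpoly)"
proof (rule ext)
  fix w
  show "nc_mult (mword a) (mword b) w = (mword (a @ b) w :: 'k)"
  proof (cases "w = a @ b")
    case True
    have "nc_mult (mword a) (mword b) w = (\<Sum>i\<in>{..length w}. if i = length a then (1::'k) else 0)"
      unfolding nc_mult_def
    proof (rule sum.cong)
      fix i assume "i \<in> {..length w}"
      then have il: "i \<le> length w" by simp
      have lt: "length (take i w) = i" using il by simp
      have h: "take i w = a \<Longrightarrow> i = length a" using lt by auto
      show "mword a (take i w) * mword b (drop i w) = (if i = length a then (1::'k) else 0)"
      proof (cases "i = length a")
        case True2: True
        have "take i w = a" "drop i w = b" using True True2 by simp_all
        then show ?thesis using True2 by (simp add: mword_def)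
      next
        case False2: False
        then have "take i w \<noteq> a" using h by blast
        then show ?thesis using False2 by (simp add: mword_def)
      qed
    qed simp
    also have "\<dots> = 1"
    proof -
      have "length a \<in> {..length w}" using True by simp
      then show ?thesis by (simp add: sum.delta)
    qed
    finally show ?thesis using True by (simp add: mword_def)
  next
    case False
    have "nc_mult (mword a) (mword b) w = (0::'k)"
      unfolding nc_mult_def
    proof (rule sum.neutral, intro ballI)
      fix i assume "i \<in> {..length w}"
      have "take i w @ drop i w = w" by (rule append_take_drop_id)
      then have "\<not> (take i w = a \<and> drop i w = b)" using False by auto
      then show "mword a (take i w) * mword b (drop i w) = (0::'k)" by (auto simp: mword_def)
    qed
    then show ?thesis using False by (simp add: mword_def)
  qed
qed

lemma nc_add_mult_distrib: "nc_mult (nc_add f1 f2) g = nc_add (nc_mult f1 g) (nc_mult f2 g)"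
  unfolding nc_mult_def nc_add_def by (rule ext) (simp add: sum.distrib ring_distribs)

lemma nc_mult_add_distrib: "nc_mult g (nc_add f1 f2) = nc_add (nc_mult g f1) (nc_mult g f2)"
  unfolding nc_mult_def nc_add_def by (rule ext) (simp add: sum.distrib ring_distribs)

lemma nc_smult_mult: "nc_mult (nc_smult c f) g = nc_smult c (nc_mult f g)"
  unfolding nc_mult_def nc_smult_def by (rule ext) (simp add: sum_distrib_left ac_simps)

lemma nc_mult_smult: "nc_mult f (nc_smult c g) = nc_smult c (nc_mult f g)"
  unfolding nc_mult_def nc_smult_def by (rule ext) (simp add: sum_distrib_left ac_simps)



definition nc_sub :: "'k::field ncpoly \<Rightarrow> 'k ncpoly \<Rightarrow> 'k ncpoly" where
  "nc_sub f g = nc_add f (nc_smult (-1) g)"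

lemma ideal_gen_sub: "S \<subseteq> nc_ideal_gen S"
  unfolding nc_ideal_gen_def by blast

lemma ideal_gen_least: "nc_is_ideal T \<Longrightarrow> S \<subseteq> T \<Longrightarrow> nc_ideal_gen S \<subseteq> T"
  unfolding nc_ideal_gen_def by blast

lemma ideal_smult: assumes "nc_is_ideal I" "f \<in> I" shows "nc_smult c f \<in> I"
proof -
  have "nc_mult (cst c) f \<in> I" using assms ncpolys_cst unfolding nc_is_ideal_def by blast
  then show ?thesis by (simp add: nc_mult_cst)
qed

lemma ideal_add: "nc_is_ideal I \<Longrightarrow> f \<in> I \<Longrightarrow> g \<in> I \<Longrightarrow> nc_add f g \<in> I"
  unfolding nc_is_ideal_def by blast

lemma ideal_sub: "nc_is_ideal I \<Longrightarrow> f \<in> I \<Longrightarrow> g \<in> I \<Longrightarrow> nc_sub f g \<in> I"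
  unfolding nc_sub_def by (intro ideal_add ideal_smult)

lemma ideal_multL: "nc_is_ideal I \<Longrightarrow> f \<in> I \<Longrightarrow> g \<in> ncpolys \<Longrightarrow> nc_mult g f \<in> I"
  unfolding nc_is_ideal_def by blast

lemma ideal_multR: "nc_is_ideal I \<Longrightarrow> f \<in> I \<Longrightarrow> g \<in> ncpolys \<Longrightarrow> nc_mult f g \<in> I"
  unfolding nc_is_ideal_def by blast

lemma ideal_zero: "nc_is_ideal I \<Longrightarrow> nc_zero \<in> I"
  unfolding nc_is_ideal_def by blast

lemma ideal_subset: "nc_is_ideal I \<Longrightarrow> I \<subseteq> ncpolys"
  unfolding nc_is_ideal_def by blast

lemma ideal_gen_ideal: assumes "S \<subseteq> ncpolys" shows "nc_is_ideal (nc_ideal_gen S)"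
proof -
  have np: "nc_is_ideal (ncpolys :: 'a ncpoly set)"
    unfolding nc_is_ideal_def using ncpolys_zero ncpolys_add ncpolys_mult by blast
  let ?F = "{I. nc_is_ideal I \<and> S \<subseteq> I}"
  have "ncpolys \<in> ?F" using np assms by simp
  then have 1: "\<Inter>?F \<subseteq> ncpolys" by blast
  have 2: "nc_zero \<in> \<Inter>?F" using ideal_zero by blast
  have 3: "\<forall>f\<in>\<Inter>?F. \<forall>g\<in>\<Inter>?F. nc_add f g \<in> \<Inter>?F" using ideal_add by blast
  have 4: "\<forall>f\<in>\<Inter>?F. \<forall>g\<in>ncpolys. nc_mult g f \<in> \<Inter>?F \<and> nc_mult f g \<in> \<Inter>?F"
    using ideal_multL ideal_multR by blast
  show ?thesis using 1 2 3 4 unfolding nc_ideal_gen_def nc_is_ideal_def by blast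
qed

lemma ncpolys_sub: "f \<in> ncpolys \<Longrightarrow> g \<in> ncpolys \<Longrightarrow> nc_sub f g \<in> ncpolys"
  unfolding nc_sub_def by (intro ncpolys_add ncpolys_smult)

lemma nc_sub_self: "nc_sub f f = nc_zero"
  unfolding nc_sub_def nc_add_def nc_smult_def nc_zero_def by auto

lemma nc_sub_zero: "nc_sub f nc_zero = f"
  unfolding nc_sub_def nc_add_def nc_smult_def nc_zero_def by auto

lemma coset_iff: "nc_coset I f = {g \<in> ncpolys. nc_sub g f \<in> I}"
  unfolding nc_coset_def nc_sub_def ..

lemma coset_self: "nc_is_ideal I \<Longrightarrow> f \<in> ncpolys \<Longrightarrow> f \<in> nc_coset I f"
  unfolding coset_iff using nc_sub_self ideal_zero by (metis (mono_tags, lifting) mem_Collect_eq)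

lemma coset_eq_iff:
  assumes I: "nc_is_ideal I" and f: "f \<in> ncpolys" and g: "g \<in> ncpolys"
  shows "nc_coset I f = nc_coset I g \<longleftrightarrow> nc_sub f g \<in> I"
proof
  assume "nc_coset I f = nc_coset I g"
  then have "f \<in> nc_coset I g" using coset_self[OF I f] by simp
  then show "nc_sub f g \<in> I" unfolding coset_iff by simp
next
  assume fg: "nc_sub f g \<in> I"
  show "nc_coset I f = nc_coset I g"
  proof (rule set_eqI)
    fix h
    have e1: "nc_sub h g = nc_add (nc_sub h f) (nc_sub f g)"
      unfolding nc_sub_def nc_add_def nc_smult_def by (rule ext) simp
    have e2: "nc_sub h f = nc_add (nc_sub h g) (nc_smult (-1) (nc_sub f g))"
      unfolding nc_sub_def nc_add_def nc_smult_def by (rule ext) simp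
    have "nc_sub h f \<in> I \<Longrightarrow> nc_sub h g \<in> I" unfolding e1 using fg ideal_add[OF I] by blast
    moreover have "nc_sub h g \<in> I \<Longrightarrow> nc_sub h f \<in> I" unfolding e2 using fg ideal_add[OF I] ideal_smult[OF I] by blast
    ultimately show "h \<in> nc_coset I f \<longleftrightarrow> h \<in> nc_coset I g"
      unfolding coset_iff by blast
  qed
qed

definition lmul :: "bool \<Rightarrow> 'k::field ncpoly \<Rightarrow> 'k ncpoly" where
  "lmul c f = (\<lambda>w. case w of [] \<Rightarrow> 0 | d # u \<Rightarrow> if d = c then f u else 0)"

definition rmul :: "'k::field ncpoly \<Rightarrow> bool \<Rightarrow> 'k ncpoly" where
  "rmul f c = (\<lambda>w. if w \<noteq> [] \<and> last w = c then f (butlast w) else 0)"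

definition SS :: "'k::field ncpoly \<Rightarrow> 'k ncpoly \<Rightarrow> 'k ncpoly set" where
  "SS r3 r4 = {f \<in> ncpolys. (\<forall>w. length w < 3 \<longrightarrow> f w = 0) \<and>
     (\<exists>l. \<forall>w. length w = 3 \<longrightarrow> f w = l * r3 w) \<and>
     (\<exists>a b c d e. \<forall>w. length w = 4 \<longrightarrow> f w = a * lmul False r3 w + b * lmul True r3 w
         + c * rmul r3 False w + d * rmul r3 True w + e * r4 w)}"

lemma multL_low:
  assumes "\<forall>w. length w < 3 \<longrightarrow> f w = 0" "length w < 3"
  shows "nc_mult g f w = 0"
  by (rule nc_mult_vanish_right) (use assms in auto)

lemma multL_3:
  assumes "\<forall>w. length w < 3 \<longrightarrow> f w = 0" "length w = 3"
  shows "nc_mult g f w = g [] * f w"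
proof -
  obtain c u where w: "w = c # u" using assms(2) by (cases w) auto
  have "nc_mult (\<lambda>v. g (c # v)) f u = 0" by (rule multL_low) (use assms w in auto)
  then show ?thesis using w by (simp add: nc_mult_Cons)
qed

lemma multL_4:
  assumes "\<forall>w. length w < 3 \<longrightarrow> f w = 0" "length w = 4"
  shows "nc_mult g f w = g [] * f w + g [hd w] * f (tl w)"
proof -
  obtain c d u where w: "w = c # d # u" using assms(2)
    by (cases w; cases "tl w") auto
  have "nc_mult (\<lambda>v. g (c # d # v)) f u = 0" by (rule multL_low) (use assms w in auto)
  then show ?thesis using w by (simp add: nc_mult_Cons)
qed

lemma multR_low:
  assumes "\<forall>w. length w < 3 \<longrightarrow> f w = 0" "length w < 3"
  shows "nc_mult f g w = 0"
  by (rule nc_mult_vanish_left) (use assms in auto)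

lemma multR_3:
  assumes "\<forall>w. length w < 3 \<longrightarrow> f w = 0" "length w = 3"
  shows "nc_mult f g w = f w * g []"
proof -
  have "w \<noteq> []" using assms(2) by auto
  then obtain c u where w: "w = u @ [c]" by (metis append_butlast_last_id)
  have "nc_mult f (\<lambda>v. g (v @ [c])) u = 0" by (rule multR_low) (use assms w in auto)
  then show ?thesis using w by (simp add: nc_mult_snoc)
qed

lemma multR_4:
  assumes "\<forall>w. length w < 3 \<longrightarrow> f w = 0" "length w = 4"
  shows "nc_mult f g w = f w * g [] + f (butlast w) * g [last w]"
proof -
  have "w \<noteq> []" using assms(2) by auto
  then obtain c u where w: "w = u @ [c]" by (metis append_butlast_last_id)
  have lu: "length u = 3" using w assms(2) by simp
  then have "u \<noteq> []" by auto
  then obtain d u' where u: "u = u' @ [d]" by (metis append_butlast_last_id)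
  have z: "nc_mult f (\<lambda>v. g ((v @ [d]) @ [c])) u' = 0" by (rule multR_low) (use assms w u in auto)
  have e1: "nc_mult f g (u @ [c]) = nc_mult f (\<lambda>v. g (v @ [c])) u + f (u @ [c]) * g []"
    by (rule nc_mult_snoc)
  have e2: "nc_mult f (\<lambda>v. g (v @ [c])) (u' @ [d]) = nc_mult f (\<lambda>v. g ((v @ [d]) @ [c])) u' + f (u' @ [d]) * g ([] @ [c])"
    by (rule nc_mult_snoc)
  show ?thesis using e1 e2 z w u by (simp add: butlast_append)
qed

lemma SS_ideal:
  assumes r3: "r3 \<in> ncpolys" "\<And>w. r3 w \<noteq> 0 \<Longrightarrow> length w = 3"
    and r4: "r4 \<in> ncpolys" "\<And>w. r4 w \<noteq> 0 \<Longrightarrow> length w = 4"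
  shows "nc_is_ideal (SS r3 r4)" "r3 \<in> SS r3 r4" "r4 \<in> SS r3 r4"
proof -
  show "r3 \<in> SS r3 r4" unfolding SS_def
  proof (intro CollectI conjI)
    show "\<forall>w. length w < 3 \<longrightarrow> r3 w = 0" using r3(2) by force
    show "\<exists>l. \<forall>w. length w = 3 \<longrightarrow> r3 w = l * r3 w" by (rule exI[of _ 1]) simp
    show "\<exists>a b c d e. \<forall>w. length w = 4 \<longrightarrow> r3 w = a * lmul False r3 w + b * lmul True r3 w
         + c * rmul r3 False w + d * rmul r3 True w + e * r4 w"
      by (rule exI[of _ 0])+ (use r3(2) in force)
  qed (rule r3(1))
  show "r4 \<in> SS r3 r4" unfolding SS_def
  proof (intro CollectI conjI)
    show "\<forall>w. length w < 3 \<longrightarrow> r4 w = 0" using r4(2) by force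
    show "\<exists>l. \<forall>w. length w = 3 \<longrightarrow> r4 w = l * r3 w" by (rule exI[of _ 0]) (use r4(2) in force)
    show "\<exists>a b c d e. \<forall>w. length w = 4 \<longrightarrow> r4 w = a * lmul False r3 w + b * lmul True r3 w
         + c * rmul r3 False w + d * rmul r3 True w + e * r4 w"
      by (rule exI[of _ 0], rule exI[of _ 0], rule exI[of _ 0], rule exI[of _ 0], rule exI[of _ 1]) simp
  qed (rule r4(1))
  have zero: "nc_zero \<in> SS r3 r4" unfolding SS_def
  proof (intro CollectI conjI)
    show "\<exists>l. \<forall>w. length w = 3 \<longrightarrow> nc_zero w = l * r3 w" by (rule exI[of _ 0]) (simp add: nc_zero_def)
    show "\<exists>a b c d e. \<forall>w. length w = 4 \<longrightarrow> nc_zero w = a * lmul False r3 w + b * lmul True r3 w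
         + c * rmul r3 False w + d * rmul r3 True w + e * r4 w"
      by (rule exI[of _ 0])+ (simp add: nc_zero_def)
  qed (simp_all add: ncpolys_zero[unfolded nc_zero_def] nc_zero_def)
  have add: "nc_add f g \<in> SS r3 r4" if f: "f \<in> SS r3 r4" and g: "g \<in> SS r3 r4" for f g
  proof -
    from f obtain l a b c d e where f1: "f \<in> ncpolys" "\<forall>w. length w < 3 \<longrightarrow> f w = 0"
      "\<forall>w. length w = 3 \<longrightarrow> f w = l * r3 w"
      "\<forall>w. length w = 4 \<longrightarrow> f w = a * lmul False r3 w + b * lmul True r3 w
         + c * rmul r3 False w + d * rmul r3 True w + e * r4 w" unfolding SS_def by blast
    from g obtain l' a' b' c' d' e' where g1: "g \<in> ncpolys" "\<forall>w. length w < 3 \<longrightarrow> g w = 0"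
      "\<forall>w. length w = 3 \<longrightarrow> g w = l' * r3 w"
      "\<forall>w. length w = 4 \<longrightarrow> g w = a' * lmul False r3 w + b' * lmul True r3 w
         + c' * rmul r3 False w + d' * rmul r3 True w + e' * r4 w" unfolding SS_def by blast
    show ?thesis unfolding SS_def
    proof (intro CollectI conjI)
      show "nc_add f g \<in> ncpolys" using f1 g1 ncpolys_add by blast
      show "\<forall>w. length w < 3 \<longrightarrow> nc_add f g w = 0" using f1 g1 by (simp add: nc_add_def)
      show "\<exists>l. \<forall>w. length w = 3 \<longrightarrow> nc_add f g w = l * r3 w"
        by (rule exI[of _ "l + l'"]) (use f1 g1 in \<open>simp add: nc_add_def algebra_simps\<close>)
      show "\<exists>a b c d e. \<forall>w. length w = 4 \<longrightarrow> nc_add f g w = a * lmul False r3 w + b * lmul True r3 w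
         + c * rmul r3 False w + d * rmul r3 True w + e * r4 w"
        by (rule exI[of _ "a + a'"], rule exI[of _ "b + b'"], rule exI[of _ "c + c'"],
            rule exI[of _ "d + d'"], rule exI[of _ "e + e'"])
          (use f1 g1 in \<open>simp add: nc_add_def algebra_simps\<close>)
    qed
  qed
  have mult: "nc_mult g f \<in> SS r3 r4 \<and> nc_mult f g \<in> SS r3 r4" if f: "f \<in> SS r3 r4" and g: "g \<in> ncpolys" for f g
  proof -
    from f obtain l a b c d e where f1: "f \<in> ncpolys" "\<forall>w. length w < 3 \<longrightarrow> f w = 0"
      "\<forall>w. length w = 3 \<longrightarrow> f w = l * r3 w"
      "\<forall>w. length w = 4 \<longrightarrow> f w = a * lmul False r3 w + b * lmul True r3 w
         + c * rmul r3 False w + d * rmul r3 True w + e * r4 w" unfolding SS_def by blast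
    have L: "nc_mult g f \<in> SS r3 r4" unfolding SS_def
    proof (intro CollectI conjI)
      show "nc_mult g f \<in> ncpolys" using f1 g ncpolys_mult by blast
      show "\<forall>w. length w < 3 \<longrightarrow> nc_mult g f w = 0" using f1 multL_low by blast
      show "\<exists>l. \<forall>w. length w = 3 \<longrightarrow> nc_mult g f w = l * r3 w"
        by (rule exI[of _ "g [] * l"]) (use f1 multL_3[OF f1(2)] in \<open>simp add: algebra_simps\<close>)
      show "\<exists>a b c d e. \<forall>w. length w = 4 \<longrightarrow> nc_mult g f w = a * lmul False r3 w + b * lmul True r3 w
         + c * rmul r3 False w + d * rmul r3 True w + e * r4 w"
      proof (rule exI[of _ "g [] * a + g [False] * l"], rule exI[of _ "g [] * b + g [True] * l"],
            rule exI[of _ "g [] * c"], rule exI[of _ "g [] * d"], rule exI[of _ "g [] * e"], intro allI impI)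
        fix w :: "bool list" assume w4: "length w = 4"
        then obtain x u where w: "w = x # u" by (cases w) auto
        have lu: "length u = 3" using w w4 by simp
        have "nc_mult g f w = g [] * f w + g [x] * f u" using multL_4[OF f1(2) w4] w by simp
        then show "nc_mult g f w = (g [] * a + g [False] * l) * lmul False r3 w + (g [] * b + g [True] * l) * lmul True r3 w
         + g [] * c * rmul r3 False w + g [] * d * rmul r3 True w + g [] * e * r4 w"
          using f1(3,4) w4 lu w by (cases x) (simp_all add: lmul_def algebra_simps)
      qed
    qed
    have R: "nc_mult f g \<in> SS r3 r4" unfolding SS_def
    proof (intro CollectI conjI)
      show "nc_mult f g \<in> ncpolys" using f1 g ncpolys_mult by blast
      show "\<forall>w. length w < 3 \<longrightarrow> nc_mult f g w = 0" using f1 multR_low by blast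
      show "\<exists>l. \<forall>w. length w = 3 \<longrightarrow> nc_mult f g w = l * r3 w"
        by (rule exI[of _ "g [] * l"]) (use f1 multR_3[OF f1(2)] in \<open>simp add: algebra_simps\<close>)
      show "\<exists>a b c d e. \<forall>w. length w = 4 \<longrightarrow> nc_mult f g w = a * lmul False r3 w + b * lmul True r3 w
         + c * rmul r3 False w + d * rmul r3 True w + e * r4 w"
      proof (rule exI[of _ "g [] * a"], rule exI[of _ "g [] * b"],
            rule exI[of _ "g [] * c + g [False] * l"], rule exI[of _ "g [] * d + g [True] * l"], rule exI[of _ "g [] * e"], intro allI impI)
        fix w :: "bool list" assume w4: "length w = 4"
        have lu: "length (butlast w) = 3" using w4 by simp
        have ne: "w \<noteq> []" using w4 by auto
        have "nc_mult f g w = f w * g [] + f (butlast w) * g [last w]" using multR_4[OF f1(2) w4] by simp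
        then show "nc_mult f g w = g [] * a * lmul False r3 w + g [] * b * lmul True r3 w
         + (g [] * c + g [False] * l) * rmul r3 False w + (g [] * d + g [True] * l) * rmul r3 True w + g [] * e * r4 w"
          using f1(3,4) w4 lu ne by (cases "last w") (simp_all add: rmul_def algebra_simps)
      qed
    qed
    show ?thesis using L R by blast
  qed
  show "nc_is_ideal (SS r3 r4)" unfolding nc_is_ideal_def
    using zero add mult by (auto simp: SS_def)
qed



definition RR :: "'k::field \<Rightarrow> 'k \<Rightarrow> 'k \<Rightarrow> 'k \<Rightarrow> 'k \<Rightarrow> 'k ncpoly \<times> 'k ncpoly" where
  "RR v w s1 s2 s3 = (nc_terms [(1, [X,Y,Y]), (v, [Y,X,Y]), (w, [Y,Y,X])],
     nc_terms [(1, [X,X,X,Y]), (s1, [X,X,Y,X]), (s2, [X,Y,X,X]), (s3, [Y,X,X,X])])"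

lemma listed_RR: assumes "r \<in> listed_rels" shows "\<exists>v w s1 s2 s3. r = RR v w s1 s2 s3"
  using assms unfolding listed_rels_def
proof (elim UnE CollectE exE conjE)
  fix p :: 'a assume "r = relsA p"
  then have "r = RR 0 (-(p^2)) p (p^2) (p^3)"
    unfolding relsA_def RR_def by (auto simp: nc_terms_def fun_eq_iff)
  then show ?thesis by blast
next
  fix i p :: 'a assume "r = relsB i p"
  then have "r = RR 0 (i * p^2) p (p^2) (p^3)"
    unfolding relsB_def RR_def by (auto simp: nc_terms_def fun_eq_iff)
  then show ?thesis by blast
next
  fix j p :: 'a assume "r = relsC j p"
  then have "r = RR p (p^2) 0 0 (j * p^3)"
    unfolding relsC_def RR_def by (auto simp: nc_terms_def fun_eq_iff)
  then show ?thesis by blast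
next
  fix v p :: 'a assume "r = relsD v p"
  then have "r = RR v (p^2) (v + p) (p^2 + p * v) (p^3)"
    unfolding relsD_def RR_def by (auto simp: nc_terms_def fun_eq_iff)
  then show ?thesis by blast
qed

lemma nc_terms_supp: "nc_terms ts u \<noteq> 0 \<Longrightarrow> u \<in> snd ` set ts"
proof (induction ts)
  case Nil then show ?case by (simp add: nc_terms_def)
next
  case (Cons t ts)
  obtain c w where t: "t = (c, w)" by (cases t)
  have "nc_terms (t # ts) u = (if w = u then c else 0) + nc_terms ts u"
    by (simp add: nc_terms_def t)
  then show ?case using Cons t by (cases "w = u") auto
qed

lemma nc_terms_ncpolys: "nc_terms ts \<in> ncpolys"
proof -
  have "{u. nc_terms ts u \<noteq> 0} \<subseteq> snd ` set ts" using nc_terms_supp by blast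
  then show ?thesis unfolding ncpolys_def by (auto intro: finite_subset)
qed

lemma RR_props:
  "fst (RR v w s1 s2 s3) \<in> ncpolys" "\<And>u. fst (RR v w s1 s2 s3) u \<noteq> 0 \<Longrightarrow> length u = 3"
  "snd (RR v w s1 s2 s3) \<in> ncpolys" "\<And>u. snd (RR v w s1 s2 s3) u \<noteq> 0 \<Longrightarrow> length u = 4"
  unfolding RR_def using nc_terms_ncpolys nc_terms_supp by fastforce+

lemma RR_decomp:
  "fst (RR v w s1 s2 s3) = nc_add (nc_mult (mword [X]) (nc_mult (mword [Y]) (mword [Y])))
     (nc_add (nc_smult v (nc_mult (mword [Y]) (nc_mult (mword [X]) (mword [Y]))))
             (nc_smult w (nc_mult (mword [Y]) (nc_mult (mword [Y]) (mword [X])))))"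
  "snd (RR v w s1 s2 s3) = nc_add (nc_mult (mword [X]) (nc_mult (mword [X]) (nc_mult (mword [X]) (mword [Y]))))
     (nc_add (nc_smult s1 (nc_mult (mword [X]) (nc_mult (mword [X]) (nc_mult (mword [Y]) (mword [X])))))
       (nc_add (nc_smult s2 (nc_mult (mword [X]) (nc_mult (mword [Y]) (nc_mult (mword [X]) (mword [X])))))
          (nc_smult s3 (nc_mult (mword [Y]) (nc_mult (mword [X]) (nc_mult (mword [X]) (mword [X])))))))"
  unfolding RR_def nc_mult_mword by (auto simp: nc_terms_def fun_eq_iff mword_def nc_add_def nc_smult_def)

lemma deg1_mult_Cons:
  assumes "\<And>u. length u \<noteq> 1 \<Longrightarrow> f u = 0"
  shows "nc_mult f g (c # u) = f [c] * g u"
proof -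
  have h: "(\<lambda>v. f (c # v)) = cst (f [c])"
    using assms by (auto simp: fun_eq_iff cst_def)
  have "f [] = 0" using assms by simp
  then show ?thesis by (simp add: nc_mult_Cons h nc_mult_cst nc_smult_def)
qed

lemma deg1_mult_Nil:
  assumes "\<And>u. length u \<noteq> 1 \<Longrightarrow> f u = 0"
  shows "nc_mult f g [] = 0"
  using assms by simp



lemma id_iso: assumes I: "nc_is_ideal I" shows "graded_alg_iso I I id"
  unfolding graded_alg_iso_def
proof (intro conjI ballI allI impI)
  show "bij_betw id (nc_quot I) (nc_quot I)" by simp
  show "id (nc_coset I nc_one) = nc_coset I nc_one" by simp
  show "\<And>n. id ` nc_quot_deg I n = nc_quot_deg I n" by simp
next
  fix f g f' g' assume p: "f \<in> ncpolys" "g \<in> ncpolys" "f' \<in> ncpolys" "g' \<in> ncpolys"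
    and e: "id (nc_coset I f) = nc_coset I f' \<and> id (nc_coset I g) = nc_coset I g'"
  have d1: "nc_sub f f' \<in> I" "nc_sub g g' \<in> I" using e coset_eq_iff[OF I p(1) p(3)] coset_eq_iff[OF I p(2) p(4)] by simp_all
  have a: "nc_sub (nc_add f g) (nc_add f' g') = nc_add (nc_sub f f') (nc_sub g g')"
    by (auto simp: fun_eq_iff nc_sub_def nc_add_def nc_smult_def)
  have m: "nc_sub (nc_mult f g) (nc_mult f' g') = nc_add (nc_mult (nc_sub f f') g) (nc_mult f' (nc_sub g g'))"
    unfolding nc_sub_def nc_add_mult_distrib nc_mult_add_distrib nc_smult_mult nc_mult_smult
    by (auto simp: fun_eq_iff nc_add_def nc_smult_def)
  have "nc_sub (nc_add f g) (nc_add f' g') \<in> I" unfolding a by (rule ideal_add[OF I d1])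
  moreover have "nc_sub (nc_mult f g) (nc_mult f' g') \<in> I" unfolding m
    by (rule ideal_add[OF I ideal_multR[OF I d1(1) p(2)] ideal_multL[OF I d1(2) p(3)]])
  ultimately show "id (nc_coset I (nc_add f g)) = nc_coset I (nc_add f' g')"
       "id (nc_coset I (nc_mult f g)) = nc_coset I (nc_mult f' g')"
    using coset_eq_iff[OF I ncpolys_add[OF p(1,2)] ncpolys_add[OF p(3,4)]]
      coset_eq_iff[OF I ncpolys_mult[OF p(1,2)] ncpolys_mult[OF p(3,4)]] by simp_all
next
  fix c f f' assume p: "f \<in> ncpolys" "f' \<in> ncpolys" and e: "id (nc_coset I f) = nc_coset I f'"
  have d1: "nc_sub f f' \<in> I" using e coset_eq_iff[OF I p(1) p(2)] by simp
  have a: "nc_sub (nc_smult c f) (nc_smult c f') = nc_smult c (nc_sub f f')"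
    by (auto simp: fun_eq_iff nc_sub_def nc_add_def nc_smult_def algebra_simps)
  show "id (nc_coset I (nc_smult c f)) = nc_coset I (nc_smult c f')"
    using coset_eq_iff[OF I ncpolys_smult[OF p(1)] ncpolys_smult[OF p(2)]] a d1 ideal_smult[OF I] by simp
qed



lemma SS_RR:
  "nc_is_ideal (SS (fst (RR v w s1 s2 s3)) (snd (RR v w s1 s2 s3)))"
  "fst (RR v w s1 s2 s3) \<in> SS (fst (RR v w s1 s2 s3)) (snd (RR v w s1 s2 s3))"
  "snd (RR v w s1 s2 s3) \<in> SS (fst (RR v w s1 s2 s3)) (snd (RR v w s1 s2 s3))"
proof -
  have a: "\<And>u. fst (RR v w s1 s2 s3) u \<noteq> 0 \<Longrightarrow> length u = 3" by (rule RR_props(2))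
  have b: "\<And>u. snd (RR v w s1 s2 s3) u \<noteq> 0 \<Longrightarrow> length u = 4" by (rule RR_props(4))
  note h = SS_ideal[OF RR_props(1) a RR_props(3) b]
  show "nc_is_ideal (SS (fst (RR v w s1 s2 s3)) (snd (RR v w s1 s2 s3)))" by (rule h(1))
  show "fst (RR v w s1 s2 s3) \<in> SS (fst (RR v w s1 s2 s3)) (snd (RR v w s1 s2 s3))" by (rule h(2))
  show "snd (RR v w s1 s2 s3) \<in> SS (fst (RR v w s1 s2 s3)) (snd (RR v w s1 s2 s3))" by (rule h(3))
qed

lemma main:
  fixes phi :: "'k::field ncpoly set \<Rightarrow> 'k ncpoly set"
  assumes iso: "graded_alg_iso (rel_ideal (RR v w s1 s2 s3)) (rel_ideal (RR v' w' s1' s2' s3')) phi"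
  shows "v = v' \<and> w = w' \<and> s1 = s1' \<and> s2 = s2' \<and> s3 = s3'"
proof -
  define r3 where "r3 = fst (RR v w s1 s2 s3)"
  define r4 where "r4 = snd (RR v w s1 s2 s3)"
  define r3' where "r3' = fst (RR v' w' s1' s2' s3')"
  define r4' where "r4' = snd (RR v' w' s1' s2' s3')"
  define I where "I = rel_ideal (RR v w s1 s2 s3)"
  define J where "J = rel_ideal (RR v' w' s1' s2' s3')"
  have Iid: "nc_is_ideal I" unfolding I_def rel_ideal_def
    by (rule ideal_gen_ideal) (use RR_props in auto)
  have Jid: "nc_is_ideal J" unfolding J_def rel_ideal_def
    by (rule ideal_gen_ideal) (use RR_props in auto)
  have SSI: "nc_is_ideal (SS r3 r4)" "r3 \<in> SS r3 r4" "r4 \<in> SS r3 r4"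
    unfolding r3_def r4_def by (rule SS_RR)+
  have SSJ: "nc_is_ideal (SS r3' r4')" "r3' \<in> SS r3' r4'" "r4' \<in> SS r3' r4'"
    unfolding r3'_def r4'_def by (rule SS_RR)+
  have IS: "I \<subseteq> SS r3 r4" unfolding I_def rel_ideal_def r3_def[symmetric] r4_def[symmetric]
    by (rule ideal_gen_least[OF SSI(1)]) (use SSI in auto)
  have JS: "J \<subseteq> SS r3' r4'" unfolding J_def rel_ideal_def r3'_def[symmetric] r4'_def[symmetric]
    by (rule ideal_gen_least[OF SSJ(1)]) (use SSJ in auto)
  have r3I: "r3 \<in> I" "r4 \<in> I" unfolding I_def rel_ideal_def r3_def r4_def using ideal_gen_sub by blast+
  have iso': "graded_alg_iso I J phi" using iso unfolding I_def J_def .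
  note isoD = iso'[unfolded graded_alg_iso_def]
  have bij: "bij_betw phi (nc_quot I) (nc_quot J)" using isoD by (elim conjE) assumption
  have homA: "\<forall>f\<in>ncpolys. \<forall>g\<in>ncpolys. \<forall>f'\<in>ncpolys. \<forall>g'\<in>ncpolys.
        phi (nc_coset I f) = nc_coset J f' \<and> phi (nc_coset I g) = nc_coset J g' \<longrightarrow>
          phi (nc_coset I (nc_add f g)) = nc_coset J (nc_add f' g') \<and>
          phi (nc_coset I (nc_mult f g)) = nc_coset J (nc_mult f' g')"
    using isoD by (elim conjE) assumption
  have smA: "\<forall>c. \<forall>f\<in>ncpolys. \<forall>f'\<in>ncpolys.
        phi (nc_coset I f) = nc_coset J f' \<longrightarrow>
          phi (nc_coset I (nc_smult c f)) = nc_coset J (nc_smult c f')"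
    using isoD by (elim conjE) assumption
  have degA: "\<forall>n. phi ` nc_quot_deg I n = nc_quot_deg J n"
    using isoD by (elim conjE) assumption
  have hom: "\<And>f g f' g'. f \<in> ncpolys \<Longrightarrow> g \<in> ncpolys \<Longrightarrow> f' \<in> ncpolys \<Longrightarrow> g' \<in> ncpolys \<Longrightarrow>
        phi (nc_coset I f) = nc_coset J f' \<Longrightarrow> phi (nc_coset I g) = nc_coset J g' \<Longrightarrow>
          phi (nc_coset I (nc_add f g)) = nc_coset J (nc_add f' g') \<and>
          phi (nc_coset I (nc_mult f g)) = nc_coset J (nc_mult f' g')"
    using homA by simp
  have sm: "\<And>c f f'. f \<in> ncpolys \<Longrightarrow> f' \<in> ncpolys \<Longrightarrow> phi (nc_coset I f) = nc_coset J f' \<Longrightarrow>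
          phi (nc_coset I (nc_smult c f)) = nc_coset J (nc_smult c f')"
    using smA by simp
  have deg: "phi ` nc_quot_deg I 1 = nc_quot_deg J 1"
    using degA by simp
  define H where "H f f' \<longleftrightarrow> f \<in> ncpolys \<and> f' \<in> ncpolys \<and> phi (nc_coset I f) = nc_coset J f'" for f f'
  have HA: "H (nc_add f g) (nc_add f' g')" if "H f f'" "H g g'" for f f' g g'
  proof -
    have *: "f \<in> ncpolys" "f' \<in> ncpolys" "phi (nc_coset I f) = nc_coset J f'"
      "g \<in> ncpolys" "g' \<in> ncpolys" "phi (nc_coset I g) = nc_coset J g'"
      using that unfolding H_def by auto
    show ?thesis unfolding H_def using hom[OF *(1) *(4) *(2) *(5) *(3) *(6)]
      ncpolys_add[OF *(1) *(4)] ncpolys_add[OF *(2) *(5)] by simp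
  qed
  have HM: "H (nc_mult f g) (nc_mult f' g')" if "H f f'" "H g g'" for f f' g g'
  proof -
    have *: "f \<in> ncpolys" "f' \<in> ncpolys" "phi (nc_coset I f) = nc_coset J f'"
      "g \<in> ncpolys" "g' \<in> ncpolys" "phi (nc_coset I g) = nc_coset J g'"
      using that unfolding H_def by auto
    show ?thesis unfolding H_def using hom[OF *(1) *(4) *(2) *(5) *(3) *(6)]
      ncpolys_mult[OF *(1) *(4)] ncpolys_mult[OF *(2) *(5)] by simp
  qed
  have HS: "H (nc_smult c f) (nc_smult c f')" if "H f f'" for c f f'
  proof -
    have *: "f \<in> ncpolys" "f' \<in> ncpolys" "phi (nc_coset I f) = nc_coset J f'"
      using that unfolding H_def by auto
    show ?thesis unfolding H_def using sm[OF *(1) *(2) *(3)]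
      ncpolys_smult[OF *(1)] ncpolys_smult[OF *(2)] by simp
  qed
  have gen: "\<exists>F. nc_homogeneous 1 F \<and> H (mword [b]) F" for b
  proof -
    have "mword [b] \<in> {f. nc_homogeneous 1 f}"
      using ncpolys_mword[of "[b]"] by (auto simp: nc_homogeneous_def mword_def)
    then have "nc_coset I (mword [b]) \<in> nc_quot_deg I 1"
      unfolding nc_quot_deg_def by (rule imageI)
    then have "phi (nc_coset I (mword [b])) \<in> nc_quot_deg J 1"
      unfolding deg[symmetric] by (rule imageI)
    then obtain F where "nc_homogeneous 1 F" "phi (nc_coset I (mword [b])) = nc_coset J F"
      unfolding nc_quot_deg_def by blast
    then show ?thesis unfolding H_def using ncpolys_mword nc_homogeneous_def by blast
  qed
  obtain X' where X'h: "nc_homogeneous 1 X'" and HX: "H (mword [X]) X'" using gen by blast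
  obtain Y' where Y'h: "nc_homogeneous 1 Y'" and HY: "H (mword [Y]) Y'" using gen by blast
  have X'0: "\<And>u. length u \<noteq> 1 \<Longrightarrow> X' u = 0" using X'h unfolding nc_homogeneous_def by blast
  have Y'0: "\<And>u. length u \<noteq> 1 \<Longrightarrow> Y' u = 0" using Y'h unfolding nc_homogeneous_def by blast
  have H0: "H nc_zero nc_zero"
  proof -
    have "H (nc_smult 0 (mword [X])) (nc_smult 0 X')" by (rule HS[OF HX])
    moreover have "nc_smult 0 f = nc_zero" for f :: "'k ncpoly" by (simp add: nc_smult_def nc_zero_def)
    ultimately show ?thesis by simp
  qed
  have inJ: "f' \<in> J" if "H f f'" "f \<in> I" for f f'
  proof -
    have f: "f \<in> ncpolys" "f' \<in> ncpolys" using that unfolding H_def by auto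
    have "nc_coset I f = nc_coset I nc_zero"
      using coset_eq_iff[OF Iid f(1) ncpolys_zero] that(2) by (simp add: nc_sub_zero)
    moreover have "phi (nc_coset I f) = nc_coset J f'" "phi (nc_coset I nc_zero) = nc_coset J nc_zero"
      using that(1) H0 unfolding H_def by auto
    ultimately have "nc_coset J f' = nc_coset J nc_zero" by simp
    then show ?thesis using coset_eq_iff[OF Jid f(2) ncpolys_zero] by (simp add: nc_sub_zero)
  qed
  define T3 where "T3 = nc_add (nc_mult X' (nc_mult Y' Y'))
     (nc_add (nc_smult v (nc_mult Y' (nc_mult X' Y')))
             (nc_smult w (nc_mult Y' (nc_mult Y' X'))))"
  define T4 where "T4 = nc_add (nc_mult X' (nc_mult X' (nc_mult X' Y')))
     (nc_add (nc_smult s1 (nc_mult X' (nc_mult X' (nc_mult Y' X'))))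
       (nc_add (nc_smult s2 (nc_mult X' (nc_mult Y' (nc_mult X' X'))))
          (nc_smult s3 (nc_mult Y' (nc_mult X' (nc_mult X' X'))))))"
  have "H r3 T3" unfolding r3_def RR_decomp T3_def by (intro HA HM HS HX HY)
  then have T3J: "T3 \<in> SS r3' r4'" using inJ r3I JS by blast
  have "H r4 T4" unfolding r4_def RR_decomp T4_def by (intro HA HM HS HX HY)
  then have T4J: "T4 \<in> SS r3' r4'" using inJ r3I JS by blast
  define a where "a = X' [X]"
  define b where "b = X' [Y]"
  define c where "c = Y' [X]"
  define d where "d = Y' [Y]"
  note ev = deg1_mult_Cons[of X', OF X'0] deg1_mult_Cons[of Y', OF Y'0]
  obtain l where l: "\<forall>u. length u = 3 \<longrightarrow> T3 u = l * r3' u" using T3J unfolding SS_def by blast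
  have E1: "a*c*c + v*(c*a*c) + w*(c*c*a) = 0"
    using l[rule_format, of "[X,X,X]"] unfolding a_def b_def c_def d_def
    by (simp add: T3_def ev nc_add_def nc_smult_def r3'_def RR_def nc_terms_def mult.assoc add.assoc)
  have E4: "b*c*c + v*(d*a*c) + w*(d*c*a) = 0"
    using l[rule_format, of "[Y,X,X]"] unfolding a_def b_def c_def d_def
    by (simp add: T3_def ev nc_add_def nc_smult_def r3'_def RR_def nc_terms_def mult.assoc add.assoc)
  have E5: "a*d*d + v*(c*b*d) + w*(c*d*b) = l"
    using l[rule_format, of "[X,Y,Y]"] unfolding a_def b_def c_def d_def
    by (simp add: T3_def ev nc_add_def nc_smult_def r3'_def RR_def nc_terms_def mult.assoc add.assoc)
  have E6: "b*c*d + v*(d*a*d) + w*(d*c*b) = l * v'"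
    using l[rule_format, of "[Y,X,Y]"] unfolding a_def b_def c_def d_def
    by (simp add: T3_def ev nc_add_def nc_smult_def r3'_def RR_def nc_terms_def mult.assoc add.assoc)
  have E7: "b*d*c + v*(d*b*c) + w*(d*d*a) = l * w'"
    using l[rule_format, of "[Y,Y,X]"] unfolding a_def b_def c_def d_def
    by (simp add: T3_def ev nc_add_def nc_smult_def r3'_def RR_def nc_terms_def mult.assoc add.assoc)
  have det: "a*d - b*c \<noteq> 0"
  proof
    assume dz: "a*d - b*c = 0"
    have "\<exists>\<mu> \<nu>. \<mu>*a + \<nu>*c = 0 \<and> \<mu>*b + \<nu>*d = 0 \<and> (\<mu> \<noteq> 0 \<or> \<nu> \<noteq> 0)"
    proof (cases "a \<noteq> 0 \<or> c \<noteq> 0")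
      case True
      then show ?thesis using dz by (intro exI[of _ c] exI[of _ "-a"]) (auto simp: algebra_simps)
    next
      case False
      show ?thesis
      proof (cases "b \<noteq> 0 \<or> d \<noteq> 0")
        case True
        then show ?thesis using False by (intro exI[of _ d] exI[of _ "-b"]) (auto simp: algebra_simps)
      next
        case False2: False
        then show ?thesis using False by (intro exI[of _ 1] exI[of _ 0]) auto
      qed
    qed
    then obtain \<mu> \<nu> where mn: "\<mu>*a + \<nu>*c = 0" "\<mu>*b + \<nu>*d = 0" "\<mu> \<noteq> 0 \<or> \<nu> \<noteq> 0" by blast
    define F where "F = nc_add (nc_smult \<mu> (mword [X])) (nc_smult \<nu> (mword [Y]))"
    have HF: "H F (nc_add (nc_smult \<mu> X') (nc_smult \<nu> Y'))" unfolding F_def by (intro HA HS HX HY)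
    have Z: "nc_add (nc_smult \<mu> X') (nc_smult \<nu> Y') = nc_zero"
    proof (rule ext)
      fix u :: "bool list"
      have len1: "length u = 1 \<Longrightarrow> u = [False] \<or> u = [True]" by (cases u) auto
      show "nc_add (nc_smult \<mu> X') (nc_smult \<nu> Y') u = nc_zero u"
      proof (cases "u = [False] \<or> u = [True]")
        case True
        then show ?thesis using mn unfolding a_def b_def c_def d_def
          by (auto simp: nc_add_def nc_smult_def nc_zero_def)
      next
        case False
        then have "length u \<noteq> 1" using len1 by blast
        then show ?thesis using X'0 Y'0 by (simp add: nc_add_def nc_smult_def nc_zero_def)
      qed
    qed
    have Fp: "F \<in> ncpolys" using HF unfolding H_def by blast
    have "phi (nc_coset I F) = phi (nc_coset I nc_zero)" using HF H0 Z unfolding H_def by simp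
    moreover have "nc_coset I F \<in> nc_quot I" "nc_coset I nc_zero \<in> nc_quot I"
      unfolding nc_quot_def using Fp ncpolys_zero by blast+
    moreover have "inj_on phi (nc_quot I)" using bij by (rule bij_betw_imp_inj_on)
    ultimately have "nc_coset I F = nc_coset I nc_zero" by (meson inj_onD)
    then have "F \<in> I" using coset_eq_iff[OF Iid Fp ncpolys_zero] by (simp add: nc_sub_zero)
    then have "F \<in> SS r3 r4" using IS by blast
    then have "F [X] = 0" "F [Y] = 0" unfolding SS_def by auto
    then have "\<mu> = 0" "\<nu> = 0" unfolding F_def by (simp_all add: nc_add_def nc_smult_def mword_def)
    then show False using mn(3) by simp
  qed
  have c0: "c = 0"
  proof (rule ccontr)
    assume c: "c \<noteq> 0"
    have "c*c*(a*(1+v+w)) = 0" using E1 by algebra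
    then have A: "a*(1+v+w) = 0" using c by simp
    have "c*(b*c + a*d*(v+w)) = 0" using E4 by algebra
    then have B: "b*c + a*d*(v+w) = 0" using c by simp
    show False
    proof (cases "a = 0")
      case True
      then have "b*c = 0" using B by simp
      then have "b = 0" using c by simp
      then show False using det True by simp
    next
      case False
      then have "1+v+w = 0" using A by simp
      then have "a*d - b*c = 0" using B by algebra
      then show False using det by simp
    qed
  qed
  have ad: "a \<noteq> 0" "d \<noteq> 0" using det c0 by auto
  have E5': "a*d*d = l" using E5 c0 by simp
  have E6': "v*(d*a*d) = l*v'" using E6 c0 by simp
  have E7': "w*(d*d*a) = l*w'" using E7 c0 by simp
  have "a*d*d*v = a*d*d*v'" using E6' unfolding E5'[symmetric] by (simp add: ac_simps)
  then have vv: "v = v'" using ad by simp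
  have "a*d*d*w = a*d*d*w'" using E7' unfolding E5'[symmetric] by (simp add: ac_simps)
  then have ww: "w = w'" using ad by simp
  obtain \<alpha> \<beta> \<gamma> \<delta> \<epsilon> where t4: "\<forall>u. length u = 4 \<longrightarrow> T4 u = \<alpha> * lmul False r3' u + \<beta> * lmul True r3' u
         + \<gamma> * rmul r3' False u + \<delta> * rmul r3' True u + \<epsilon> * r4' u" using T4J unfolding SS_def by blast
  have c0': "Y' [False] = 0" using c0 unfolding c_def .
  have G1: "a*(a*(a*d)) = \<epsilon>"
    using t4[rule_format, of "[X,X,X,Y]"] unfolding a_def b_def c_def d_def
    by (simp add: c0' T4_def ev nc_add_def nc_smult_def r3'_def r4'_def RR_def nc_terms_def lmul_def rmul_def mult.assoc add.assoc)
  have G2: "s1*(a*(a*(d*a))) = \<epsilon>*s1'"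
    using t4[rule_format, of "[X,X,Y,X]"] unfolding a_def b_def c_def d_def
    by (simp add: c0' T4_def ev nc_add_def nc_smult_def r3'_def r4'_def RR_def nc_terms_def lmul_def rmul_def mult.assoc add.assoc)
  have G3: "s2*(a*(d*(a*a))) = \<epsilon>*s2'"
    using t4[rule_format, of "[X,Y,X,X]"] unfolding a_def b_def c_def d_def
    by (simp add: c0' T4_def ev nc_add_def nc_smult_def r3'_def r4'_def RR_def nc_terms_def lmul_def rmul_def mult.assoc add.assoc)
  have G4: "s3*(d*(a*(a*a))) = \<epsilon>*s3'"
    using t4[rule_format, of "[Y,X,X,X]"] unfolding a_def b_def c_def d_def
    by (simp add: c0' T4_def ev nc_add_def nc_smult_def r3'_def r4'_def RR_def nc_terms_def lmul_def rmul_def mult.assoc add.assoc)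
  have nz: "a*(a*(a*d)) \<noteq> 0" using ad by simp
  have q: "a*(a*(d*a)) = a*(a*(a*d))" "a*(d*(a*a)) = a*(a*(a*d))" "d*(a*(a*a)) = a*(a*(a*d))"
    by (simp_all add: ac_simps)
  note G2 = G2[unfolded q] and G3 = G3[unfolded q] and G4 = G4[unfolded q]
  have "s1 = s1'" using G1 G2 nz by (metis mult.commute mult_right_cancel)
  moreover have "s2 = s2'" using G1 G3 nz by (metis mult.commute mult_right_cancel)
  moreover have "s3 = s3'" using G1 G4 nz by (metis mult.commute mult_right_cancel)
  ultimately show ?thesis using vv ww by simp
qed


theorem proposition7p12:
  fixes r1 r2 :: "'k::field ncpoly \<times> 'k ncpoly"
  assumes "r1 \<in> listed_rels" and "r2 \<in> listed_rels"
  shows "graded_alg_isomorphic (rel_ideal r1) (rel_ideal r2) \<longleftrightarrow> r1 = r2"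
proof -
  obtain v w s1 s2 s3 where r1: "r1 = RR v w s1 s2 s3" using listed_RR[OF assms(1)] by blast
  obtain v' w' s1' s2' s3' where r2: "r2 = RR v' w' s1' s2' s3'" using listed_RR[OF assms(2)] by blast
  show ?thesis
  proof
    assume "graded_alg_isomorphic (rel_ideal r1) (rel_ideal r2)"
    then obtain phi where "graded_alg_iso (rel_ideal r1) (rel_ideal r2) phi"
      unfolding graded_alg_isomorphic_def by blast
    then have "v = v' \<and> w = w' \<and> s1 = s1' \<and> s2 = s2' \<and> s3 = s3'"
      unfolding r1 r2 by (rule main)
    then show "r1 = r2" unfolding r1 r2 by simp
  next
    assume e: "r1 = r2"
    have "nc_is_ideal (rel_ideal r2)" unfolding r2 rel_ideal_def
      by (rule ideal_gen_ideal) (use RR_props in auto)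
    then have "graded_alg_iso (rel_ideal r2) (rel_ideal r2) id" by (rule id_iso)
    then show "graded_alg_isomorphic (rel_ideal r1) (rel_ideal r2)"
      unfolding graded_alg_isomorphic_def e by blast
  qed
qed

end
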